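(* Assume Assumptions B and C hold, let $w^{(t)}$ be generated by Algorithm 2 and $\eta^{(t)}=D\sqrt{\varepsilon}$ for some $D>0$. Then for all $i\in[n]$ and $0\le t<T$, $$\|\epsilon_i^{(t)}\|^2\le c\big(2+(V+\varepsilon^2+2)GD^2\big)^2\varepsilon^2.$$
   Context: Let $n,c,d$ be positive integers and $[n]=\{1,\dots,n\}$. For each $i\in[n]$ let $h(\cdot;i):\mathbb{R}^d\to\mathbb{R}^c$ (components $h_j(\cdot;i)$) and $\phi_i:\mathbb{R}^c\to\mathbb{R}$ differentiable. Norms: Euclidean for vectors, operator for matrices. Assumption B: each $h(\cdot;i)$ is twice continuously differentiable and there is $G>0$ with $\|\nabla_w^2 h_j(w;i)\|\le G$ for all $w,i,j$. Iteration setup: given $\varepsilon>0$, $\eta^{(t)}>0$, $\alpha_i^{(t)}>0$ and iterates $w^{(t)}$, let $H_i^{(t)}$ be the Jacobian of $h(\cdot;i)$ at $w^{(t)}$, $\Phi^{(t)}(v)=\frac{1}{2n}\sum_{i=1}^n\|\eta^{(t)}H_i^{(t)}v-\alpha_i^{(t)}\nabla\phi_i(h(w^{(t)};i))\|^2$, $\Psi^{(t)}(v)=\Phi^{(t)}(v)+\frac{\varepsilon^2}{2}\|v\|^2$, $v_{*\mathrm{reg}}^{(t)}$ its unique minimizer. Algorithm 2: $w^{(t+1)}=w^{(t)}-\eta^{(t)}v^{(t)}$ where $\|v^{(t)}-v_{*\mathrm{reg}}^{(t)}\|\le\varepsilon$, $t=0,\dots,T-1$. Assumption C (constant $V>0$):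 for each $0\le t<T$ there is $\hat v^{(t)}$ with $\|\hat v^{(t)}\|^2\le V$ and $\Phi^{(t)}(\hat v^{(t)})\le\varepsilon^2$. Error vector: $\epsilon_i^{(t)}=h(w^{(t+1)};i)-h(w^{(t)};i)+\eta^{(t)}H_i^{(t)}v^{(t)}\in\mathbb{R}^c$. *)

theory Defs
  imports "HOL-Analysis.Analysis"
begin

definition grad :: "(real^'c \<Rightarrow> real) \<Rightarrow> real^'c \<Rightarrow> real^'c" where
  "grad f x = (\<chi> k. frechet_derivative f (at x) (axis k 1))"

definition jac :: "(real^'d \<Rightarrow> real^'c) \<Rightarrow> real^'d \<Rightarrow> real^'d^'c" where
  "jac h w = matrix (frechet_derivative h (at w))"

text \<open>Assumption B for a single map: h is twice continuously differentiable and every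
  component h_j has Hessian of operator norm at most G everywhere.\<close>
definition C2_hessian_bounded :: "(real^'d \<Rightarrow> real^'c) \<Rightarrow> real \<Rightarrow> bool" where
  "C2_hessian_bounded h G \<longleftrightarrow>
     (\<forall>j. \<exists>g :: real^'d \<Rightarrow> real^'d. \<exists>Hs :: real^'d \<Rightarrow> real^'d^'d.
        (\<forall>w. ((\<lambda>u. h u $ j) has_derivative (\<lambda>v. g w \<bullet> v)) (at w)) \<and>
        (\<forall>w. (g has_derivative (\<lambda>v. Hs w *v v)) (at w)) \<and>
        continuous_on UNIV Hs \<and>
        (\<forall>w. onorm (\<lambda>v. Hs w *v v) \<le> G))"

definition Phi :: "nat \<Rightarrow> (nat \<Rightarrow> real^'d \<Rightarrow> real^'c) \<Rightarrow> (nat \<Rightarrow> real^'c \<Rightarrow> real)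
     \<Rightarrow> real \<Rightarrow> (nat \<Rightarrow> real) \<Rightarrow> real^'d \<Rightarrow> real^'d \<Rightarrow> real" where
  "Phi n h phi eta alpha w v =
     (1 / (2 * real n)) * (\<Sum>i\<in>{1..n}.
        (norm (eta *\<^sub>R (jac (h i) w *v v) - alpha i *\<^sub>R grad (phi i) (h i w)))\<^sup>2)"

definition Psi :: "nat \<Rightarrow> (nat \<Rightarrow> real^'d \<Rightarrow> real^'c) \<Rightarrow> (nat \<Rightarrow> real^'c \<Rightarrow> real)
     \<Rightarrow> real \<Rightarrow> (nat \<Rightarrow> real) \<Rightarrow> real^'d \<Rightarrow> real \<Rightarrow> real^'d \<Rightarrow> real" where
  "Psi n h phi eta alpha w \<epsilon> v = Phi n h phi eta alpha w v + \<epsilon>\<^sup>2 / 2 * (norm v)\<^sup>2"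

end

theory Submission
  imports Defs
begin

lemma taylor1:
  fixes f :: "real^'d \<Rightarrow> real" and g :: "real^'d \<Rightarrow> real^'d" and Hs :: "real^'d \<Rightarrow> real^'d^'d"
  assumes fd: "\<forall>x. (f has_derivative (\<lambda>v. g x \<bullet> v)) (at x)"
    and gd: "\<forall>x. (g has_derivative (\<lambda>v. Hs x *v v)) (at x)"
    and Hb: "\<forall>x. onorm (\<lambda>v. Hs x *v v) \<le> G"
  shows "\<bar>f (w + d) - f w - g w \<bullet> d\<bar> \<le> G / 2 * (norm d)\<^sup>2"
proof -
  define diff where "diff m = (if m = 0 then (\<lambda>s. f (w + s *\<^sub>R d)) else if m = 1 then (\<lambda>s. g (w + s *\<^sub>R d) \<bullet> d)
     else (\<lambda>s. (Hs (w + s *\<^sub>R d) *v d) \<bullet> d))" for m :: nat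
  have lin: "\<And>s. ((\<lambda>s. w + s *\<^sub>R d) has_derivative (\<lambda>s. s *\<^sub>R d)) (at s)"
    by (auto intro!: derivative_eq_intros)
  have d0: "DERIV (diff 0) s :> diff 1 s" for s
  proof -
    have "((\<lambda>s. f (w + s *\<^sub>R d)) has_derivative (\<lambda>x. g (w + s *\<^sub>R d) \<bullet> (x *\<^sub>R d))) (at s)"
      using has_derivative_compose[OF lin fd[rule_format]] by simp
    then show ?thesis unfolding has_field_derivative_def diff_def
      by (simp add: mult_commute_abs)
  qed
  have d1: "DERIV (diff 1) s :> diff 2 s" for s
  proof -
    have "((\<lambda>s. g (w + s *\<^sub>R d)) has_derivative (\<lambda>x. Hs (w + s *\<^sub>R d) *v (x *\<^sub>R d))) (at s)"
      using has_derivative_compose[OF lin gd[rule_format]] by simp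
    then have "((\<lambda>s. g (w + s *\<^sub>R d) \<bullet> d) has_derivative (\<lambda>x. (Hs (w + s *\<^sub>R d) *v (x *\<^sub>R d)) \<bullet> d)) (at s)"
      by (rule has_derivative_inner_left)
    then show ?thesis unfolding has_field_derivative_def diff_def
      by (simp add: mult_commute_abs matrix_vector_mult_scaleR)
  qed
  have "\<forall>m t. m < 2 \<and> 0 \<le> t \<and> t \<le> 1 \<longrightarrow> DERIV (diff m) t :> diff (Suc m) t"
    using d0 d1 by (metis One_nat_def less_2_cases numeral_2_eq_2)
  from Maclaurin[OF _ _ _ this, of "diff 0"]
  obtain t where "f (w + d) = (\<Sum>m<2. diff m 0 / fact m * 1 ^ m) + diff 2 t / fact 2 * 1 ^ 2"
    by (auto simp: diff_def)
  then have eq: "f (w + d) - f w - g w \<bullet> d = (Hs (w + t *\<^sub>R d) *v d) \<bullet> d / 2"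
    by (simp add: diff_def numeral_2_eq_2)
  have "\<bar>(Hs (w + t *\<^sub>R d) *v d) \<bullet> d\<bar> \<le> norm (Hs (w + t *\<^sub>R d) *v d) * norm d"
    by (rule Cauchy_Schwarz_ineq2)
  also have "\<dots> \<le> (onorm (\<lambda>v. Hs (w + t *\<^sub>R d) *v v) * norm d) * norm d"
    by (intro mult_right_mono onorm) auto
  also have "\<dots> \<le> (G * norm d) * norm d"
    by (intro mult_right_mono Hb[rule_format]) auto
  finally show ?thesis unfolding eq by (simp add: power2_eq_square)
qed
lemma jac_bound:
  fixes h :: "real^'d \<Rightarrow> real^'c"
  assumes "C2_hessian_bounded h G"
  shows "(norm (h (w + d) - h w - jac h w *v d))\<^sup>2 \<le> real CARD('c) * (G/2 * (norm d)\<^sup>2)\<^sup>2"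
proof -
  obtain gg HH where gg:
    "\<And>j. (\<forall>w. ((\<lambda>u. h u $ j) has_derivative (\<lambda>v. gg j w \<bullet> v)) (at w))"
    "\<And>j. (\<forall>w. (gg j has_derivative (\<lambda>v. HH j w *v v)) (at w))"
    "\<And>j. (\<forall>w. onorm (\<lambda>v. HH j w *v v) \<le> G)"
  proof -
    have ex: "\<forall>j. \<exists>g. \<exists>Hs. (\<forall>w. ((\<lambda>u. h u $ j) has_derivative (\<lambda>v. g w \<bullet> v)) (at w)) \<and>
        (\<forall>w. (g has_derivative (\<lambda>v. Hs w *v v)) (at w)) \<and> (\<forall>w. onorm (\<lambda>v. Hs w *v v) \<le> G)"
      using assms unfolding C2_hessian_bounded_def by blast
    then have "\<exists>gg. \<forall>j. \<exists>Hs. (\<forall>w. ((\<lambda>u. h u $ j) has_derivative (\<lambda>v. gg j w \<bullet> v)) (at w)) \<and>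
        (\<forall>w. (gg j has_derivative (\<lambda>v. Hs w *v v)) (at w)) \<and> (\<forall>w. onorm (\<lambda>v. Hs w *v v) \<le> G)"
      by (rule choice)
    then obtain gg where "\<forall>j. \<exists>Hs. (\<forall>w. ((\<lambda>u. h u $ j) has_derivative (\<lambda>v. gg j w \<bullet> v)) (at w)) \<and>
        (\<forall>w. (gg j has_derivative (\<lambda>v. Hs w *v v)) (at w)) \<and> (\<forall>w. onorm (\<lambda>v. Hs w *v v) \<le> G)" ..
    then have "\<exists>HH. \<forall>j. (\<forall>w. ((\<lambda>u. h u $ j) has_derivative (\<lambda>v. gg j w \<bullet> v)) (at w)) \<and>
        (\<forall>w. (gg j has_derivative (\<lambda>v. HH j w *v v)) (at w)) \<and> (\<forall>w. onorm (\<lambda>v. HH j w *v v) \<le> G)"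
      by (rule choice)
    then obtain HH where "\<forall>j. (\<forall>w. ((\<lambda>u. h u $ j) has_derivative (\<lambda>v. gg j w \<bullet> v)) (at w)) \<and>
        (\<forall>w. (gg j has_derivative (\<lambda>v. HH j w *v v)) (at w)) \<and> (\<forall>w. onorm (\<lambda>v. HH j w *v v) \<le> G)" ..
    then show ?thesis using that by blast
  qed
  define F where "F = (\<lambda>v. \<chi> j. gg j w \<bullet> v)"
  have hd: "(h has_derivative F) (at w)"
  proof (rule has_derivative_componentwise_within[THEN iffD2], intro ballI)
    fix i :: "real^'c" assume "i \<in> Basis"
    then obtain j where i: "i = axis j 1" by (auto simp: Basis_vec_def)
    show "((\<lambda>x. h x \<bullet> i) has_derivative (\<lambda>x. F x \<bullet> i)) (at w)"
      using gg(1)[of j] unfolding i F_def by (simp add: inner_axis)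
  qed
  have "bounded_linear F" using hd by (rule has_derivative_bounded_linear)
  then have J: "jac h w *v d = F d"
    unfolding jac_def frechet_derivative_at[OF hd, symmetric]
    using fun_cong[OF matrix_vector_mul(3)[OF \<open>bounded_linear F\<close>], of d] by simp
  define e where "e = h (w + d) - h w - jac h w *v d"
  have comp: "\<bar>e $ j\<bar> \<le> G/2 * (norm d)\<^sup>2" for j
    using taylor1[OF gg(1)[of j] gg(2)[of j] gg(3)[of j], of w d]
    unfolding e_def J F_def by simp
  have "(norm e)\<^sup>2 = (\<Sum>j\<in>UNIV. (e $ j)\<^sup>2)"
    unfolding power2_norm_eq_inner by (simp add: inner_vec_def power2_eq_square)
  also have "\<dots> \<le> (\<Sum>j\<in>(UNIV::'c set). (G/2 * (norm d)\<^sup>2)\<^sup>2)"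
    proof (intro sum_mono)
    fix j show "(e $ j)\<^sup>2 \<le> (G/2 * (norm d)\<^sup>2)\<^sup>2" using power_mono[OF comp[of j] abs_ge_zero, of 2] by simp
  qed
  also have "\<dots> = real CARD('c) * (G/2 * (norm d)\<^sup>2)\<^sup>2" by simp
  finally show ?thesis unfolding e_def .
qed

theorem mainTheorem15:
  fixes n :: nat and T :: nat
    and h :: "nat \<Rightarrow> real^'d \<Rightarrow> real^'c"
    and phi :: "nat \<Rightarrow> real^'c \<Rightarrow> real"
    and G V D \<epsilon> :: real
    and eta :: "nat \<Rightarrow> real" and alpha :: "nat \<Rightarrow> nat \<Rightarrow> real"
    and w v vreg :: "nat \<Rightarrow> real^'d"
  assumes n_pos: "n > 0"
    and phi_diff: "\<forall>i\<in>{1..n}. \<forall>x. phi i differentiable (at x)"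
    and G_pos: "G > 0"
    and assmB: "\<forall>i\<in>{1..n}. C2_hessian_bounded (h i) G"
    and eps_pos: "\<epsilon> > 0"
    and D_pos: "D > 0"
    and eta_def: "\<forall>t<T. eta t = D * sqrt \<epsilon>"
    and alpha_pos: "\<forall>t<T. \<forall>i\<in>{1..n}. alpha i t > 0"
    and vreg_min: "\<forall>t<T. \<forall>u. Psi n h phi (eta t) (\<lambda>i. alpha i t) (w t) \<epsilon> (vreg t)
                                 \<le> Psi n h phi (eta t) (\<lambda>i. alpha i t) (w t) \<epsilon> u"
    and alg_step: "\<forall>t<T. w (Suc t) = w t - eta t *\<^sub>R v t"
    and alg_inexact: "\<forall>t<T. norm (v t - vreg t) \<le> \<epsilon>"
    and V_pos: "V > 0"
    and assmC: "\<forall>t<T. \<exists>vh. (norm vh)\<^sup>2 \<le> V \<and>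
                          Phi n h phi (eta t) (\<lambda>i. alpha i t) (w t) vh \<le> \<epsilon>\<^sup>2"
  shows "\<forall>i\<in>{1..n}. \<forall>t<T.
           (norm (h i (w (Suc t)) - h i (w t) + eta t *\<^sub>R (jac (h i) (w t) *v v t)))\<^sup>2
             \<le> real CARD('c) * (2 + (V + \<epsilon>\<^sup>2 + 2) * G * D\<^sup>2)\<^sup>2 * \<epsilon>\<^sup>2"
  proof (intro ballI allI impI)
  fix i t assume i: "i \<in> {1..n}" and t: "t < T"
  define et where "et = eta t"
  have et: "et = D * sqrt \<epsilon>" using eta_def t et_def by simp
  have et2: "et\<^sup>2 = D\<^sup>2 * \<epsilon>" using et eps_pos by (simp add: power_mult_distrib)
  define P where "P = Phi n h phi (eta t) (\<lambda>i. alpha i t) (w t)"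
  have Pnn: "P u \<ge> 0" for u
    unfolding P_def Phi_def by (intro mult_nonneg_nonneg sum_nonneg) auto
  obtain vh where vh: "(norm vh)\<^sup>2 \<le> V" "P vh \<le> \<epsilon>\<^sup>2" using assmC t unfolding P_def by blast
  have "P (vreg t) + \<epsilon>\<^sup>2 / 2 * (norm (vreg t))\<^sup>2 \<le> P vh + \<epsilon>\<^sup>2 / 2 * (norm vh)\<^sup>2"
    using vreg_min t unfolding P_def Psi_def by blast
  also have "\<dots> \<le> \<epsilon>\<^sup>2 + \<epsilon>\<^sup>2 / 2 * V"
    using vh by (intro add_mono mult_left_mono) auto
  finally have "\<epsilon>\<^sup>2 / 2 * (norm (vreg t))\<^sup>2 \<le> \<epsilon>\<^sup>2 * (1 + V/2)"
    using Pnn[of "vreg t"] by (simp add: algebra_simps)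
  then have "\<epsilon>\<^sup>2 * ((norm (vreg t))\<^sup>2 / 2) \<le> \<epsilon>\<^sup>2 * (1 + V/2)" by simp
  then have nr: "(norm (vreg t))\<^sup>2 \<le> 2 + V"
    using eps_pos by (simp add: mult_le_cancel_left)
  have "norm (v t) \<le> norm (vreg t) + \<epsilon>"
    using alg_inexact t norm_triangle_sub[of "v t" "vreg t"] by (smt (verit) norm_minus_commute norm_triangle_ineq2)
  then have "(norm (v t))\<^sup>2 \<le> (norm (vreg t) + \<epsilon>)\<^sup>2"
    by (intro power_mono) auto
  also have "\<dots> \<le> 2 * (norm (vreg t))\<^sup>2 + 2 * \<epsilon>\<^sup>2"
    by (smt (verit) power2_sum sum_squares_bound)
  finally have nv: "(norm (v t))\<^sup>2 \<le> 4 + 2 * V + 2 * \<epsilon>\<^sup>2" using nr by simp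
  define d where "d = (- et) *\<^sub>R v t"
  have hw: "w (Suc t) = w t + d" using alg_step t unfolding d_def et_def by simp
  have jd: "jac (h i) (w t) *v d = - (et *\<^sub>R (jac (h i) (w t) *v v t))"
    unfolding d_def matrix_vector_mult_scaleR by simp
  have eq: "h i (w (Suc t)) - h i (w t) + eta t *\<^sub>R (jac (h i) (w t) *v v t)
      = h i (w t + d) - h i (w t) - jac (h i) (w t) *v d"
    unfolding hw jd et_def by simp
  define B where "B = G/2 * (norm d)\<^sup>2"
  define X where "X = 2 + (V + \<epsilon>\<^sup>2 + 2) * G * D\<^sup>2"
  have Bnn: "0 \<le> B" unfolding B_def using G_pos by simp
  have "B = G * D\<^sup>2 * \<epsilon> * ((norm (v t))\<^sup>2 / 2)"
    unfolding B_def d_def using et2 by (simp add: power_mult_distrib)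
  also have "\<dots> \<le> G * D\<^sup>2 * \<epsilon> * (2 + V + \<epsilon>\<^sup>2)"
    using nv G_pos eps_pos by (intro mult_left_mono) auto
  also have "\<dots> \<le> X * \<epsilon>" unfolding X_def using eps_pos by (simp add: algebra_simps)
  finally have BX: "B \<le> X * \<epsilon>" .
  have "(norm (h i (w (Suc t)) - h i (w t) + eta t *\<^sub>R (jac (h i) (w t) *v v t)))\<^sup>2
      \<le> real CARD('c) * B\<^sup>2"
    unfolding eq B_def using jac_bound[OF assmB[rule_format, OF i]] by blast
  also have "\<dots> \<le> real CARD('c) * (X * \<epsilon>)\<^sup>2"
    using BX Bnn by (intro mult_left_mono power_mono) auto
  finally show "(norm (h i (w (Suc t)) - h i (w t) + eta t *\<^sub>R (jac (h i) (w t) *v v t)))\<^sup>2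
             \<le> real CARD('c) * (2 + (V + \<epsilon>\<^sup>2 + 2) * G * D\<^sup>2)\<^sup>2 * \<epsilon>\<^sup>2"
    unfolding X_def by (simp add: power_mult_distrib)
qed

end
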